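(* Let $R$ be a finite commutative unital ring, $N\ge2$ with $N\in R^{\times}$, and $q\in R$ a root of the $N$-th cyclotomic polynomial over $\mathbb{Z}$. Let $\alpha$ be the exponent of $R^{\times}$ (which is divisible by $N$), let $k$ be the integer with $\alpha=kN$, and let $\beta$ be the nilpotence index of $R$. For $u\in R^{\times}$ and $a\in R$, the element \[\mathcal{Q}_u=(u^k-G^{\alpha})G^{\beta}\in T\] is a polynomial $H_N^q$-identity for $\mathcal{B}_{(u,a)}$.
   Context: The nilpotence index $\beta$ of $R$ is a positive integer such that $r^\beta=0$ for every nilpotent $r\in R$ (the largest nilpotency index of a nilpotent element). $H_N^q$ is the Taft Hopf algebra over $R$: generated by $g,x$ with $g^N=1$, $x^N=0$, $xg=qgx$, $\Delta(g)=g\otimes g$, $\Delta(x)=1\otimes x+x\otimes g$, $\varepsilon(g)=1$, $\varepsilon(x)=0$, free over $R$ with basis $\{g^mx^n:0\le m,n<N\}$. $\mathcal{B}_{(u,a)}$ is the $R$-algebra generated by $v_g,v_x$ with $v_g^N=u$, $v_x^N=a$, $v_xv_g=qv_gv_x$, a right $H_N^q$-comodule algebra via $v_g\mapsto v_g\otimes g$, $v_x\mapsto1\otimes x+v_x\otimes g$. Let $Z_i^H$ ($i\ge1$) be copies $\{Z_i^h:h\in H_N^q\}$ of the $R$-module $H_N^q$, $T=T(\bigoplus_iZ_i^H)$ the tensor algebra with coaction $\delta(Z_i^h)=\sum Z_i^{h_1}\otimes h_2$, and $G=Z_1^g$; $u^k$ denotes the scalar $u^k\cdot 1_T$. $P\in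 T$ is a polynomial $H_N^q$-identity for a right $H_N^q$-comodule algebra $B$ if $f(P)=0$ for all right $H_N^q$-comodule algebra maps $f:T\to B$. *)

theory Defs
  imports Complex_Main "HOL-Computational_Algebra.Polynomial"
begin

definition cyclotomic_poly :: "nat \<Rightarrow> int poly" where
  "cyclotomic_poly N = (THE p. map_poly (of_int :: int \<Rightarrow> complex) p =
      (\<Prod>k\<in>{k\<in>{1..N}. coprime k N}. [:- cis (2 * pi * real k / real N), 1:]))"

definition units_exponent :: "'r::comm_ring_1 itself \<Rightarrow> nat" where
  "units_exponent _ = (LEAST n. 0 < n \<and> (\<forall>x::'r. x dvd 1 \<longrightarrow> x ^ n = 1))"

definition nilpotence_index :: "'r::comm_ring_1 itself \<Rightarrow> nat" where
  "nilpotence_index _ = (LEAST n. 0 < n \<and> (\<forall>x::'r. (\<exists>m. x ^ m = 0) \<longrightarrow> x ^ n = 0))"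

text \<open>Elements of the free module with basis 'b are coefficient functions of finite support.\<close>
definition bsupp :: "('b \<Rightarrow> 'r::zero) \<Rightarrow> 'b set" where
  "bsupp v = {b. v b \<noteq> 0}"

definition bcarrier :: "'b set \<Rightarrow> ('b \<Rightarrow> 'r::zero) set" where
  "bcarrier S = {v. finite (bsupp v) \<and> bsupp v \<subseteq> S}"

definition bvec :: "'b \<Rightarrow> 'b \<Rightarrow> 'r::{zero,one}" where
  "bvec b = (\<lambda>c. if c = b then 1 else 0)"

text \<open>Multiplication determined by structure constants m b1 b2 c (coefficient of c in b1*b2).\<close>
definition bmult :: "('b \<Rightarrow> 'b \<Rightarrow> 'b \<Rightarrow> 'r::comm_ring_1) \<Rightarrow> ('b \<Rightarrow> 'r) \<Rightarrow> ('b \<Rightarrow> 'r) \<Rightarrow> ('b \<Rightarrow> 'r)" where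
  "bmult m v w = (\<lambda>c. \<Sum>b1\<in>bsupp v. \<Sum>b2\<in>bsupp w. v b1 * w b2 * m b1 b2 c)"

definition bpow :: "('b \<Rightarrow> 'b \<Rightarrow> 'b \<Rightarrow> 'r::comm_ring_1) \<Rightarrow> ('b \<Rightarrow> 'r) \<Rightarrow> ('b \<Rightarrow> 'r) \<Rightarrow> nat \<Rightarrow> ('b \<Rightarrow> 'r)" where
  "bpow m one v n = (bmult m v ^^ n) one"

definition tens :: "('a \<Rightarrow> 'a \<Rightarrow> 'a \<Rightarrow> 'r::comm_ring_1) \<Rightarrow> ('b \<Rightarrow> 'b \<Rightarrow> 'b \<Rightarrow> 'r) \<Rightarrow>
    ('a \<times> 'b) \<Rightarrow> ('a \<times> 'b) \<Rightarrow> ('a \<times> 'b) \<Rightarrow> 'r" where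
  "tens m1 m2 = (\<lambda>(a1, b1) (a2, b2) (a, b). m1 a1 a2 a * m2 b1 b2 b)"

text \<open>Basis element (m, n) stands for g^m x^n, with m, n < N.
  g^m x^n * g^m' x^n' = q^(n m') g^(m+m' mod N) x^(n+n'), which is 0 if n+n' >= N.\<close>
definition taft_basis :: "nat \<Rightarrow> (nat \<times> nat) set" where
  "taft_basis N = {..<N} \<times> {..<N}"

definition taft_mult :: "nat \<Rightarrow> 'r::comm_ring_1 \<Rightarrow> nat \<times> nat \<Rightarrow> nat \<times> nat \<Rightarrow> nat \<times> nat \<Rightarrow> 'r" where
  "taft_mult N q = (\<lambda>(m, n) (m', n') c.
      if n + n' < N \<and> c = ((m + m') mod N, n + n') then q ^ (n * m') else 0)"

text \<open>Comultiplication, as the algebra map with Delta(g) = g (x) g and Delta(x) = 1 (x) x + x (x) g: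
  Delta(g^m x^n) = Delta(g)^m Delta(x)^n computed in H (x) H.\<close>
definition taft_Delta :: "nat \<Rightarrow> 'r::comm_ring_1 \<Rightarrow> nat \<times> nat \<Rightarrow> ((nat \<times> nat) \<times> (nat \<times> nat) \<Rightarrow> 'r)" where
  "taft_Delta N q = (\<lambda>(m, n).
     (let mm = tens (taft_mult N q) (taft_mult N q);
          one = bvec ((0, 0), (0, 0));
          gg = bvec ((1, 0), (1, 0));
          xx = (\<lambda>c. bvec ((0, 0), (0, 1)) c + bvec ((0, 1), (1, 0)) c)
      in bmult mm (bpow mm one gg m) (bpow mm one xx n)))"

text \<open>Basis element (i, j) stands for v_g^i v_x^j, with i, j < N; relations
  v_g^N = u, v_x^N = a, v_x v_g = q v_g v_x.\<close>
definition Bua_mult :: "nat \<Rightarrow> 'r::comm_ring_1 \<Rightarrow> 'r \<Rightarrow> 'r \<Rightarrow> nat \<times> nat \<Rightarrow> nat \<times> nat \<Rightarrow> nat \<times> nat \<Rightarrow> 'r" where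
  "Bua_mult N q u a = (\<lambda>(i, j) (i', j') c.
      if c = ((i + i') mod N, (j + j') mod N)
      then q ^ (j * i') * (if N \<le> i + i' then u else 1) * (if N \<le> j + j' then a else 1)
      else 0)"

text \<open>Coaction: v_g |-> v_g (x) g, v_x |-> 1 (x) x + v_x (x) g, extended multiplicatively
  (computed in B (x) H) and then linearly.\<close>
definition Bua_rho_basis :: "nat \<Rightarrow> 'r::comm_ring_1 \<Rightarrow> 'r \<Rightarrow> 'r \<Rightarrow> nat \<times> nat \<Rightarrow> ((nat \<times> nat) \<times> (nat \<times> nat) \<Rightarrow> 'r)" where
  "Bua_rho_basis N q u a = (\<lambda>(i, j).
     (let mm = tens (Bua_mult N q u a) (taft_mult N q);
          one = bvec ((0, 0), (0, 0));
          vg = bvec ((1, 0), (1, 0));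
          vx = (\<lambda>c. bvec ((0, 0), (0, 1)) c + bvec ((0, 1), (1, 0)) c)
      in bmult mm (bpow mm one vg i) (bpow mm one vx j)))"

definition Bua_rho :: "nat \<Rightarrow> 'r::comm_ring_1 \<Rightarrow> 'r \<Rightarrow> 'r \<Rightarrow> (nat \<times> nat \<Rightarrow> 'r) \<Rightarrow> ((nat \<times> nat) \<times> (nat \<times> nat) \<Rightarrow> 'r)" where
  "Bua_rho N q u a b = (\<lambda>c. \<Sum>\<beta>\<in>bsupp b. b \<beta> * Bua_rho_basis N q u a \<beta> c)"

text \<open>A letter (i, (m, n)) is the basis element Z_i^(g^m x^n) of the i-th copy Z_i^H (i \<ge> 1);
  T is the free R-module on words of letters, multiplication is concatenation.\<close>
type_synonym letter = "nat \<times> (nat \<times> nat)"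

definition T_basis :: "nat \<Rightarrow> letter list set" where
  "T_basis N = lists ({i. 1 \<le> i} \<times> taft_basis N)"

definition T_mult :: "letter list \<Rightarrow> letter list \<Rightarrow> letter list \<Rightarrow> 'r::comm_ring_1" where
  "T_mult w1 w2 w = (if w = w1 @ w2 then 1 else 0)"

text \<open>delta(Z_i^h) = sum Z_i^(h_1) (x) h_2, extended multiplicatively (in T (x) H) and linearly.\<close>
definition T_delta_letter :: "nat \<Rightarrow> 'r::comm_ring_1 \<Rightarrow> letter \<Rightarrow> (letter list \<times> (nat \<times> nat) \<Rightarrow> 'r)" where
  "T_delta_letter N q = (\<lambda>(i, h) (w, h2).
      (case w of [(i', h1)] \<Rightarrow> if i' = i then taft_Delta N q h (h1, h2) else 0 | _ \<Rightarrow> 0))"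

definition T_delta_word :: "nat \<Rightarrow> 'r::comm_ring_1 \<Rightarrow> letter list \<Rightarrow> (letter list \<times> (nat \<times> nat) \<Rightarrow> 'r)" where
  "T_delta_word N q w = foldr (\<lambda>l acc. bmult (tens T_mult (taft_mult N q)) (T_delta_letter N q l) acc)
       w (bvec ([], (0, 0)))"

definition T_delta :: "nat \<Rightarrow> 'r::comm_ring_1 \<Rightarrow> (letter list \<Rightarrow> 'r) \<Rightarrow> (letter list \<times> (nat \<times> nat) \<Rightarrow> 'r)" where
  "T_delta N q t = (\<lambda>c. \<Sum>w\<in>bsupp t. t w * T_delta_word N q w c)"

definition tens_id :: "((letter list \<Rightarrow> 'r) \<Rightarrow> (nat \<times> nat \<Rightarrow> 'r)) \<Rightarrow>
    (letter list \<times> (nat \<times> nat) \<Rightarrow> 'r) \<Rightarrow> ((nat \<times> nat) \<times> (nat \<times> nat) \<Rightarrow> 'r)" where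
  "tens_id f s = (\<lambda>(b, h). f (\<lambda>w. s (w, h)) b)"

definition comod_alg_hom :: "nat \<Rightarrow> 'r::comm_ring_1 \<Rightarrow> 'r \<Rightarrow> 'r \<Rightarrow>
    ((letter list \<Rightarrow> 'r) \<Rightarrow> (nat \<times> nat \<Rightarrow> 'r)) \<Rightarrow> bool" where
  "comod_alg_hom N q u a f \<longleftrightarrow>
     (\<forall>t\<in>bcarrier (T_basis N). f t \<in> bcarrier (taft_basis N)) \<and>
     (\<forall>t\<in>bcarrier (T_basis N). \<forall>t'\<in>bcarrier (T_basis N).
         f (\<lambda>w. t w + t' w) = (\<lambda>b. f t b + f t' b)) \<and>
     (\<forall>r. \<forall>t\<in>bcarrier (T_basis N). f (\<lambda>w. r * t w) = (\<lambda>b. r * f t b)) \<and>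
     (\<forall>t\<in>bcarrier (T_basis N). \<forall>t'\<in>bcarrier (T_basis N).
         f (bmult T_mult t t') = bmult (Bua_mult N q u a) (f t) (f t')) \<and>
     f (bvec []) = bvec (0, 0) \<and>
     (\<forall>t\<in>bcarrier (T_basis N). Bua_rho N q u a (f t) = tens_id f (T_delta N q t))"

definition poly_H_identity :: "nat \<Rightarrow> 'r::comm_ring_1 \<Rightarrow> 'r \<Rightarrow> 'r \<Rightarrow> (letter list \<Rightarrow> 'r) \<Rightarrow> bool" where
  "poly_H_identity N q u a P \<longleftrightarrow> (\<forall>f. comod_alg_hom N q u a f \<longrightarrow> f P = (\<lambda>_. 0))"

definition T_G :: "letter list \<Rightarrow> 'r::comm_ring_1" where
  "T_G = bvec [(1, (1, 0))]"

definition Q_poly :: "'r::comm_ring_1 \<Rightarrow> nat \<Rightarrow> nat \<Rightarrow> nat \<Rightarrow> letter list \<Rightarrow> 'r" where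
  "Q_poly u k alpha beta = bmult T_mult
      (\<lambda>w. u ^ k * bvec [] w - bpow T_mult (bvec []) T_G alpha w)
      (bpow T_mult (bvec []) T_G beta)"

end

theory Submission
  imports Defs "HOL-Computational_Algebra.Fundamental_Theorem_Algebra"
begin

definition Qc :: "nat \<Rightarrow> complex poly" where
 "Qc n = (\<Prod>k\<in>{k\<in>{1..n}. coprime k n}. [:- cis (2 * pi * real k / real n), 1:])"

lemma mp_add: "map_poly (of_int::int\<Rightarrow>'a::comm_ring_1) (p + q) = map_poly of_int p + map_poly of_int q"
  by (intro poly_eqI) (simp add: coeff_map_poly)
lemma mp_diff: "map_poly (of_int::int\<Rightarrow>'a::comm_ring_1) (p - q) = map_poly of_int p - map_poly of_int q"
  by (intro poly_eqI) (simp add: coeff_map_poly)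
lemma mp_mult: "map_poly (of_int::int\<Rightarrow>'a::comm_ring_1) (p * q) = map_poly of_int p * map_poly of_int q"
  by (intro poly_eqI) (simp add: coeff_map_poly coeff_mult of_int_sum of_int_mult)
lemma mp_prod: "map_poly (of_int::int\<Rightarrow>'a::comm_ring_1) (\<Prod>i\<in>A. f i) = (\<Prod>i\<in>A. map_poly of_int (f i))"
  by (induction A rule: infinite_finite_induct) (simp_all add: mp_mult)
lemma mp_Xn1: "map_poly (of_int::int\<Rightarrow>'a::comm_ring_1) (monom 1 n - 1) = monom 1 n - 1"
  by (simp add: mp_diff map_poly_monom)
lemma mp_inj: "map_poly (of_int::int\<Rightarrow>'a::ring_char_0) p = map_poly of_int q \<Longrightarrow> p = q"
proof (intro poly_eqI)
  fix n assume "map_poly (of_int::int\<Rightarrow>'a::ring_char_0) p = map_poly of_int q"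
  hence "coeff (map_poly (of_int::int\<Rightarrow>'a::ring_char_0) p) n = coeff (map_poly of_int q) n" by simp
  thus "coeff p n = coeff q n" by (simp add: coeff_map_poly)
qed

lemma cis_2pi_nat: "cis (2 * pi * real m) = 1"
proof -
  have "cis (2*pi) ^ m = cis (real m * (2*pi))" by (rule DeMoivre)
  moreover have "cis (2*pi) = 1" by (simp add: complex_eq_iff)
  ultimately show ?thesis by (simp add: mult_ac)
qed

lemma cis_root_mod:
  assumes "n > 0" shows "cis (2*pi*real k/real n) = cis (2*pi*real (k mod n)/real n)"
proof -
  have "real k = real (k mod n) + real n * real (k div n)"
    by (metis of_nat_add of_nat_mult mod_mult_div_eq add.commute)
  hence "2*pi*real k/real n = 2*pi*real (k mod n)/real n + 2*pi*real (k div n)"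
    using assms by (simp add: field_simps)
  hence "cis (2*pi*real k/real n) = cis (2*pi*real (k mod n)/real n) * cis (2*pi*real (k div n))"
    by (metis cis_mult)
  thus ?thesis by (simp add: cis_2pi_nat)
qed

lemma lemA:
  assumes n: "n > 0"
  shows "(monom 1 n - 1 :: complex poly) = (\<Prod>k\<in>{1..n}. [:- cis (2 * pi * real k / real n), 1:])"
proof -
  let ?p = "monom 1 n - 1 :: complex poly"
  have c: "coeff ?p n = 1" using n by (simp add: coeff_diff coeff_monom)
  have deg: "degree ?p = n"
  proof (rule antisym)
    show "degree ?p \<le> n" by (intro degree_diff_le) (auto simp: degree_monom_le)
    show "n \<le> degree ?p" using c by (intro le_degree) simp
  qed
  have lc: "lead_coeff ?p = 1" using c deg by simp
  have roots: "{z. poly ?p z = 0} = {z. z ^ n = 1}" by (auto simp: poly_monom)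
  have pd: "pderiv ?p = monom (of_nat n) (n - 1)" by (simp add: pderiv_diff pderiv_monom)
  have "rsquarefree ?p"
    unfolding rsquarefree_roots
  proof (intro allI notI)
    fix a assume "poly ?p a = 0 \<and> poly (pderiv ?p) a = 0"
    hence a1: "a ^ n = 1" and a2: "of_nat n * a ^ (n - 1) = 0" by (auto simp: pd poly_monom)
    have "a \<noteq> 0" using a1 n by (auto simp: power_0_left)
    thus False using a2 n by simp
  qed
  hence "?p = (\<Prod>z\<in>{z. z ^ n = 1}. [:-z, 1:])"
    using complex_poly_decompose_rsquarefree[of ?p] lc roots by simp
  also have "\<dots> = (\<Prod>k\<in>{..<n}. [:- cis (2 * pi * real k / real n), 1:])"
    by (rule prod.reindex_bij_betw[OF bij_betw_roots_unity[OF n], symmetric])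
  also have "\<dots> = (\<Prod>k\<in>{1..n}. [:- cis (2 * pi * real (k mod n) / real n), 1:])"
  proof (rule prod.reindex_bij_betw[symmetric])
    show "bij_betw (\<lambda>k. k mod n) {1..n} {..<n}"
      unfolding bij_betw_def
    proof
      show "inj_on (\<lambda>k. k mod n) {1..n}"
      proof (rule inj_onI)
        fix x y assume "x \<in> {1..n}" "y \<in> {1..n}" "x mod n = y mod n"
        thus "x = y" using n
          by (cases "x = n"; cases "y = n") (auto simp: le_less)
      qed
      show "(\<lambda>k. k mod n) ` {1..n} = {..<n}"
      proof
        show "(\<lambda>k. k mod n) ` {1..n} \<subseteq> {..<n}" using n by auto
        show "{..<n} \<subseteq> (\<lambda>k. k mod n) ` {1..n}"
        proof
          fix j assume j: "j \<in> {..<n}"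
          show "j \<in> (\<lambda>k. k mod n) ` {1..n}"
          proof (cases "j = 0")
            case True thus ?thesis using n by (intro image_eqI[of _ _ n]) auto
          next
            case False thus ?thesis using j by (intro image_eqI[of _ _ j]) auto
          qed
        qed
      qed
    qed
  qed
  also have "\<dots> = (\<Prod>k\<in>{1..n}. [:- cis (2 * pi * real k / real n), 1:])"
    using cis_root_mod[OF n] by simp
  finally show ?thesis .
qed

lemma dvd_div_facts:
  assumes "d dvd (n::nat)" "n > 0"
  shows "d > 0" "n div d > 0" "n div (n div d) = d" "d * (n div d) = n" "d \<le> n"
proof -
  obtain m where m: "n = d * m" using assms(1) by blast
  have d0: "d > 0" using m assms(2) by (metis gr0I mult_0)
  have m0: "m > 0" using m assms(2) by (metis gr0I mult_0_right)
  have nd: "n div d = m" using m d0 by simp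
  show "d > 0" by (rule d0)
  show "n div d > 0" using nd m0 by simp
  show "n div (n div d) = d" using nd m m0 by simp
  show "d * (n div d) = n" using nd m by simp
  show "d \<le> n" using assms by (simp add: dvd_imp_le)
qed

lemma gcd_mult_div:
  fixes d n k :: nat
  assumes "d dvd n" "n > 0" "coprime k d"
  shows "gcd (k * (n div d)) n = n div d"
proof -
  define m where "m = n div d"
  have m: "n = d * m" using dvd_div_facts[OF assms(1,2)] by (simp add: m_def)
  have "gcd (k * m) (d * m) = m * gcd k d" by (metis gcd_mult_distrib_nat mult.commute)
  thus ?thesis using m assms(3) by (simp add: m_def[symmetric])
qed

definition Fr :: "nat \<Rightarrow> nat \<Rightarrow> complex poly" where
  "Fr n k = [:- cis (2 * pi * real k / real n), 1:]"

definition Kset :: "nat \<Rightarrow> nat set" where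
  "Kset d = {k\<in>{1..d}. coprime k d}"

definition hmap :: "nat \<Rightarrow> nat \<times> nat \<Rightarrow> nat" where
  "hmap n x = snd x * (n div fst x)"

lemma hmap_simp[simp]: "hmap n (d, k) = k * (n div d)"
  by (simp add: hmap_def)

lemma Qc_Fr: "Qc d = prod (Fr d) (Kset d)"
  by (simp add: Qc_def Fr_def Kset_def)

lemma lemB_bij:
  assumes n: "n > 0"
  shows "bij_betw (hmap n) (Sigma {d. d dvd n} Kset) {1..n}"
  unfolding bij_betw_def
proof
  show "inj_on (hmap n) (Sigma {d. d dvd n} Kset)"
  proof (rule inj_onI)
    fix x y assume x: "x \<in> Sigma {d. d dvd n} Kset" and y: "y \<in> Sigma {d. d dvd n} Kset"
      and e: "hmap n x = hmap n y"
    obtain d1 k1 where 1: "x = (d1, k1)" "d1 dvd n" "coprime k1 d1" using x by (auto simp: Kset_def)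
    obtain d2 k2 where 2: "y = (d2, k2)" "d2 dvd n" "coprime k2 d2" using y by (auto simp: Kset_def)
    have e': "k1 * (n div d1) = k2 * (n div d2)" using e 1(1) 2(1) by simp
    have "n div d1 = n div d2"
      using gcd_mult_div[OF 1(2) n 1(3)] gcd_mult_div[OF 2(2) n 2(3)] e' by metis
    hence dd: "d1 = d2" using dvd_div_facts(3)[OF 1(2) n] dvd_div_facts(3)[OF 2(2) n] by metis
    have "n div d1 > 0" using dvd_div_facts(2)[OF 1(2) n] .
    hence "k1 = k2" using e' dd by simp
    thus "x = y" using dd 1(1) 2(1) by simp
  qed
  show "hmap n ` Sigma {d. d dvd n} Kset = {1..n}"
  proof
    show "hmap n ` Sigma {d. d dvd n} Kset \<subseteq> {1..n}"
    proof
      fix z assume "z \<in> hmap n ` Sigma {d. d dvd n} Kset"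
      then obtain d k where dk: "z = k * (n div d)" "d dvd n" "1 \<le> k" "k \<le> d" by (auto simp: Kset_def)
      note f = dvd_div_facts[OF dk(2) n]
      have "k * (n div d) \<le> d * (n div d)" using dk(4) by simp
      moreover have "1 * 1 \<le> k * (n div d)" using dk(3) f(2) by (intro mult_le_mono) auto
      ultimately show "z \<in> {1..n}" using dk(1) f(4) by simp
    qed
    show "{1..n} \<subseteq> hmap n ` Sigma {d. d dvd n} Kset"
    proof
      fix z assume z: "z \<in> {1..n}"
      define g where "g = gcd z n"
      have g0: "g > 0" using n by (simp add: g_def)
      have gz: "g dvd z" "g dvd n" by (simp_all add: g_def)
      define d where "d = n div g"
      define k where "k = z div g"
      have cop: "coprime k d" unfolding k_def d_def g_def
        using div_gcd_coprime[of z n] n by simp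
      note fg = dvd_div_facts[OF gz(2) n]
      have ddvd: "d dvd n" unfolding d_def using fg(4) by (metis dvd_triv_right)
      have "g \<le> z" using gz z by (simp add: dvd_imp_le)
      hence "g div g \<le> z div g" by (rule div_le_mono)
      hence k1: "k \<ge> 1" unfolding k_def using g0 by simp
      have kd: "k \<le> d" unfolding k_def d_def using z by (simp add: div_le_mono)
      have "n div d = g" unfolding d_def using fg(3) .
      hence "hmap n (d, k) = z" unfolding k_def using gz by simp
      moreover have "(d, k) \<in> Sigma {d. d dvd n} Kset" using cop ddvd k1 kd by (simp add: Kset_def)
      ultimately show "z \<in> hmap n ` Sigma {d. d dvd n} Kset" by (metis image_eqI)
    qed
  qed
qed

lemma lemB_val:
  assumes n: "n > 0" and dk: "d dvd n"
  shows "Fr n (k * (n div d)) = Fr d k"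
proof -
  define m where "m = n div d"
  note f = dvd_div_facts[OF dk n]
  have "real n = real d * real m" using f(4) unfolding m_def by (metis of_nat_mult)
  moreover have "d > 0" "m > 0" using f unfolding m_def by auto
  ultimately have "2 * pi * real (k * m) / real n = 2 * pi * real k / real d"
    by (simp add: field_simps)
  thus ?thesis by (simp add: Fr_def m_def)
qed

lemma lemB:
  assumes n: "n > 0"
  shows "prod (Fr n) {1..n} = (\<Prod>d\<in>{d. d dvd n}. Qc d)"
proof -
  have fin: "finite {d. d dvd n}" using n by simp
  have fK: "\<forall>d\<in>{d. d dvd n}. finite (Kset d)" by (simp add: Kset_def)
  have "(\<Prod>d\<in>{d. d dvd n}. Qc d) = (\<Prod>d\<in>{d. d dvd n}. prod (Fr d) (Kset d))"
    by (simp add: Qc_Fr)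
  also have "\<dots> = (\<Prod>x\<in>Sigma {d. d dvd n} Kset. Fr (fst x) (snd x))"
    using prod.Sigma[OF fin fK, of "\<lambda>d k. Fr d k"] by (simp add: case_prod_beta')
  also have "\<dots> = (\<Prod>x\<in>Sigma {d. d dvd n} Kset. Fr n (hmap n x))"
    by (rule prod.cong[OF refl]) (auto simp: lemB_val[OF n])
  also have "\<dots> = prod (Fr n) {1..n}"
    by (rule prod.reindex_bij_betw[OF lemB_bij[OF n]])
  finally show ?thesis by (rule sym)
qed

lemma Xn1_prod: "n > 0 \<Longrightarrow> (monom 1 n - 1 :: complex poly) = (\<Prod>d\<in>{d. d dvd n}. Qc d)"
  using lemA lemB by (simp add: Fr_def)

lemma lc_Qc: "lead_coeff (Qc n) = 1"
  by (simp add: Qc_def lead_coeff_prod)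

lemma lemC: "n > 0 \<Longrightarrow> \<exists>p. map_poly of_int p = Qc n"
proof (induction n rule: less_induct)
  case (less n)
  let ?D = "{d. d dvd n} - {n}"
  have fin: "finite {d. d dvd n}" using less.prems by simp
  have "\<forall>d\<in>?D. \<exists>p. map_poly of_int p = Qc d"
  proof
    fix d assume d: "d \<in> ?D"
    hence "d > 0" "d < n" using dvd_div_facts(1,5)[of d n] less.prems by auto
    thus "\<exists>p. map_poly of_int p = Qc d" using less.IH by blast
  qed
  then obtain pp where pp: "\<And>d. d \<in> ?D \<Longrightarrow> map_poly of_int (pp d) = Qc d" by metis
  define M where "M = (\<Prod>d\<in>?D. pp d)"
  have mM: "map_poly of_int M = (\<Prod>d\<in>?D. Qc d)" unfolding M_def mp_prod using pp by simp
  have eq: "(monom 1 n - 1 :: complex poly) = Qc n * map_poly of_int M"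
    using Xn1_prod[OF less.prems] prod.remove[OF fin, of n Qc] mM by simp
  have lcm: "lead_coeff (map_poly (of_int :: int \<Rightarrow> complex) M) = 1" using mM by (simp add: lead_coeff_prod lc_Qc)
  have degM: "degree (map_poly (of_int :: int \<Rightarrow> complex) M) = degree M" by (rule degree_map_poly) simp
  have "lead_coeff M = 1" using lcm degM by (simp add: coeff_map_poly)
  hence M0: "M \<noteq> 0" by auto
  obtain s r where sr: "pseudo_divmod (monom 1 n - 1) M = (s, r)" by (cases "pseudo_divmod (monom 1 n - 1) M") auto
  from pseudo_divmod[OF M0 sr] \<open>lead_coeff M = 1\<close>
  have e1: "monom 1 n - 1 = M * s + r" and e2: "r = 0 \<or> degree r < degree M" by simp_all
  have "(monom 1 n - 1 :: complex poly) = map_poly of_int M * map_poly of_int s + map_poly of_int r"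
    using arg_cong[OF e1, of "map_poly (of_int :: int \<Rightarrow> complex)"] by (simp add: mp_Xn1 mp_add mp_mult)
  hence e3: "map_poly of_int M * (Qc n - map_poly of_int s) = (map_poly of_int r :: complex poly)"
    using eq by (simp add: algebra_simps)
  show ?case
  proof (rule ccontr)
    assume "\<not> ?case"
    hence ne: "Qc n - map_poly of_int s \<noteq> 0" by auto
    have mM0: "map_poly (of_int :: int \<Rightarrow> complex) M \<noteq> 0" using lcm by auto
    have "degree (map_poly (of_int :: int \<Rightarrow> complex) M * (Qc n - map_poly of_int s)) \<ge> degree M"
      using degree_mult_eq[OF mM0 ne] degM by simp
    moreover have "map_poly (of_int :: int \<Rightarrow> complex) r \<noteq> 0" using e3 mM0 ne by (metis mult_eq_0_iff)
    hence "r \<noteq> 0" by auto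
    moreover have "degree (map_poly (of_int :: int \<Rightarrow> complex) r) = degree r" by (rule degree_map_poly) simp
    ultimately show False using e2 e3 by simp
  qed
qed

lemma cyc_map:
  assumes N: "N > 0"
  shows "map_poly (of_int :: int \<Rightarrow> complex) (cyclotomic_poly N) = Qc N"
proof -
  obtain p where p: "map_poly (of_int :: int \<Rightarrow> complex) p = Qc N" using lemC[OF N] by blast
  have ex: "\<exists>!p. map_poly (of_int :: int \<Rightarrow> complex) p = Qc N"
  proof (rule ex1I[of _ p])
    show "map_poly (of_int :: int \<Rightarrow> complex) p = Qc N" by (rule p)
    fix p' assume "map_poly (of_int :: int \<Rightarrow> complex) p' = Qc N"
    hence "map_poly (of_int :: int \<Rightarrow> complex) p' = map_poly of_int p" using p by simp
    thus "p' = p" by (rule mp_inj)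
  qed
  hence "map_poly (of_int :: int \<Rightarrow> complex) (THE p. map_poly (of_int :: int \<Rightarrow> complex) p = Qc N) = Qc N"
    by (rule theI')
  moreover have "cyclotomic_poly N = (THE p. map_poly (of_int :: int \<Rightarrow> complex) p = Qc N)"
    by (simp only: cyclotomic_poly_def Qc_def)
  ultimately show ?thesis by simp
qed

lemma lemE:
  assumes N: "N > 0" and d: "d dvd N" "0 < d" "d < N"
  shows "\<exists>B. monom 1 N - 1 = cyclotomic_poly N * (monom 1 d - 1) * B"
proof -
  let ?E = "{e. e dvd N} - {N} - {e. e dvd d}"
  have fin: "finite {e. e dvd N}" using N by simp
  have "\<forall>e\<in>?E. \<exists>p. map_poly of_int p = Qc e"
  proof
    fix e assume "e \<in> ?E"
    hence "e > 0" using dvd_div_facts(1)[of e N] N by auto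
    thus "\<exists>p. map_poly of_int p = Qc e" using lemC by blast
  qed
  then obtain pp where pp: "\<And>e. e \<in> ?E \<Longrightarrow> map_poly of_int (pp e) = Qc e" by metis
  define B where "B = (\<Prod>e\<in>?E. pp e)"
  have mB: "map_poly of_int B = (\<Prod>e\<in>?E. Qc e)" unfolding B_def mp_prod using pp by simp
  have sub: "{e. e dvd d} \<subseteq> {e. e dvd N} - {N}"
  proof
    fix e assume "e \<in> {e. e dvd d}"
    hence "e dvd d" by simp
    hence "e dvd N" "e \<le> d" using d by (auto intro: dvd_trans simp: dvd_imp_le)
    thus "e \<in> {e. e dvd N} - {N}" using d by auto
  qed
  have split: "{e. e dvd N} = insert N ({e. e dvd d} \<union> ?E)" using sub N by auto
  have finE: "finite ?E" using fin by auto
  have fd: "finite {e. e dvd d}" using d by simp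
  have "N \<notin> {e. e dvd d} \<union> ?E" using d by (auto dest: dvd_imp_le)
  have "prod Qc {e. e dvd N} = prod Qc (insert N ({e. e dvd d} \<union> ?E))" by (metis split)
  also have "\<dots> = Qc N * prod Qc ({e. e dvd d} \<union> ?E)"
    by (rule prod.insert) (use finE fd \<open>N \<notin> {e. e dvd d} \<union> ?E\<close> in auto)
  also have "prod Qc ({e. e dvd d} \<union> ?E) = prod Qc {e. e dvd d} * prod Qc ?E"
    by (rule prod.union_disjoint) (use finE fd in auto)
  finally have "(\<Prod>e\<in>{e. e dvd N}. Qc e) = Qc N * ((\<Prod>e\<in>{e. e dvd d}. Qc e) * (\<Prod>e\<in>?E. Qc e))" .
  hence "(monom 1 N - 1 :: complex poly) = Qc N * (monom 1 d - 1) * map_poly of_int B"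
    using Xn1_prod[OF N] Xn1_prod[of d] d mB by (simp add: mult.assoc)
  hence "map_poly (of_int :: int \<Rightarrow> complex) (monom 1 N - 1) = map_poly of_int (cyclotomic_poly N * (monom 1 d - 1) * B)"
    by (simp add: mp_mult mp_Xn1 cyc_map[OF N])
  thus ?thesis using mp_inj by blast
qed

lemma q_facts:
  fixes q :: "'r::comm_ring_1"
  assumes N2: "2 \<le> N" and Nu: "(of_nat N :: 'r) dvd 1"
    and root: "poly (map_poly of_int (cyclotomic_poly N)) q = 0"
  shows "q ^ N = 1" and "\<And>m. q ^ m = 1 \<Longrightarrow> N dvd m"
proof -
  have N0: "N > 0" using N2 by simp
  let ?P = "cyclotomic_poly N"
  have ev: "poly (map_poly (of_int :: int \<Rightarrow> 'r) (x * y)) q =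
            poly (map_poly of_int x) q * poly (map_poly of_int y) q" for x y
    by (simp add: mp_mult)
  have evX: "poly (map_poly (of_int :: int \<Rightarrow> 'r) (monom 1 n - 1)) q = q ^ n - 1" for n
    by (simp add: mp_Xn1 poly_monom)
  obtain B1 where B1: "monom 1 N - 1 = ?P * (monom 1 1 - 1) * B1" using lemE[OF N0, of 1] N2 by auto
  have "q ^ N - 1 = 0"
    using arg_cong[OF B1, of "\<lambda>x. poly (map_poly (of_int :: int \<Rightarrow> 'r) x) q"]
    by (simp only: ev evX root) simp
  thus qN: "q ^ N = 1" by simp
  have nd: False if d: "d dvd N" "0 < d" "d < N" and qd: "q ^ d = 1" for d
  proof -
    obtain B where B: "monom 1 N - 1 = ?P * ((monom 1 d - 1) * B)" using lemE[OF N0 d] by (auto simp: mult.assoc)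
    let ?Y = "(monom 1 d - 1) * B"
    have "pderiv (monom 1 N - 1 :: int poly) = monom (of_nat N) (N - 1)"
      by (simp add: pderiv_diff pderiv_monom)
    moreover have "pderiv (monom 1 N - 1 :: int poly) = ?P * pderiv ?Y + ?Y * pderiv ?P"
      by (subst B) (rule pderiv_mult)
    ultimately have E: "monom (of_nat N) (N - 1) = ?P * pderiv ?Y + ?Y * pderiv ?P" by simp
    have "poly (map_poly (of_int :: int \<Rightarrow> 'r) (monom (of_nat N) (N - 1))) q = of_nat N * q ^ (N - 1)"
      by (simp add: map_poly_monom poly_monom)
    moreover have "poly (map_poly (of_int :: int \<Rightarrow> 'r) (?P * pderiv ?Y + ?Y * pderiv ?P)) q = 0"
      by (simp only: mp_add poly_add ev evX root qd) simp
    ultimately have "of_nat N * q ^ (N - 1) = (0::'r)" using E by metis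
    hence "of_nat N * (q ^ (N - 1) * q) = (0::'r)" by (metis mult.assoc mult_zero_left)
    hence "(of_nat N :: 'r) = 0" using qN power_minus_mult[OF N0, of q] by simp
    thus False using Nu by simp
  qed
  show "N dvd m" if qm: "q ^ m = 1" for m
  proof (cases "m = 0")
    case True thus ?thesis by simp
  next
    case False
    obtain x y where xy: "m * x = N * y + gcd m N" using bezout_nat[OF False] by blast
    have "q ^ (m * x) = 1" using qm by (simp add: power_mult)
    moreover have "q ^ (N * y) = 1" using qN by (simp add: power_mult)
    ultimately have qg: "q ^ gcd m N = 1" using xy by (simp add: power_add)
    have g: "gcd m N dvd N" "0 < gcd m N" "gcd m N \<le> N" using N0 by (auto simp: dvd_imp_le)
    show ?thesis
    proof (rule ccontr)
      assume "\<not> N dvd m"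
      hence "gcd m N \<noteq> N" by (metis gcd_dvd1)
      thus False using nd[OF g(1,2) _ qg] g(3) by simp
    qed
  qed
qed

lemma pow_period:
  fixes x :: "'r::comm_ring_1"
  assumes "x ^ i = x ^ j" "i \<le> j"
  shows "x ^ (i + t * (j - i)) = x ^ i"
proof (induction t)
  case (Suc t)
  have "i + Suc t * (j - i) = (i + t * (j - i)) + (j - i)" by simp
  hence "x ^ (i + Suc t * (j - i)) = x ^ (i + t * (j - i)) * x ^ (j - i)" by (simp only: power_add)
  also have "\<dots> = x ^ i * x ^ (j - i)" using Suc.IH by simp
  also have "\<dots> = x ^ j" using assms(2) by (simp add: power_add[symmetric])
  finally show ?case using assms(1) by simp
qed simp

lemma pigeon_pow:
  fixes x :: "'r::{comm_ring_1,finite}"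
  shows "\<exists>i j. i < j \<and> j \<le> card (UNIV::'r set) \<and> x ^ i = x ^ j"
proof -
  have "\<not> inj_on (\<lambda>i. x ^ i) {..card (UNIV::'r set)}"
  proof
    assume "inj_on (\<lambda>i. x ^ i) {..card (UNIV::'r set)}"
    hence "card {..card (UNIV::'r set)} \<le> card (UNIV :: 'r set)"
      by (rule card_inj_on_le) auto
    thus False by simp
  qed
  then obtain i j where ij: "i \<le> card (UNIV::'r set)" "j \<le> card (UNIV::'r set)" "i \<noteq> j" "x ^ i = x ^ j"
    unfolding inj_on_def by auto
  show ?thesis
  proof (cases "i < j")
    case True thus ?thesis using ij by blast
  next
    case False thus ?thesis using ij by (intro exI[of _ j] exI[of _ i]) auto
  qed
qed

lemma unit_pow_one:
  fixes x :: "'r::{comm_ring_1,finite}"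
  assumes "x dvd 1"
  shows "\<exists>k. 0 < k \<and> k \<le> card (UNIV::'r set) \<and> x ^ k = 1"
proof -
  obtain i j where ij: "i < j" "j \<le> card (UNIV::'r set)" "x ^ i = x ^ j" using pigeon_pow by blast
  obtain y where y: "1 = x * y" using assms by (auto elim!: dvdE)
  have "x ^ i * x ^ (j - i) = x ^ j" using ij(1) by (simp add: power_add[symmetric])
  hence "x ^ i * x ^ (j - i) = x ^ i * 1" using ij(3) by simp
  hence "(y ^ i * x ^ i) * x ^ (j - i) = (y ^ i * x ^ i) * 1" by (metis mult.assoc)
  moreover have "y ^ i * x ^ i = 1" using y by (metis mult.commute power_mult_distrib power_one)
  ultimately have "x ^ (j - i) = 1" by simp
  thus ?thesis using ij by (intro exI[of _ "j - i"]) auto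
qed

lemma alpha_facts:
  shows "0 < units_exponent TYPE('r::{comm_ring_1,finite})"
    and "\<And>x::'r. x dvd 1 \<Longrightarrow> x ^ units_exponent TYPE('r) = 1"
proof -
  have ex: "\<exists>n. 0 < n \<and> (\<forall>x::'r. x dvd 1 \<longrightarrow> x ^ n = 1)"
  proof (intro exI[of _ "fact (card (UNIV::'r set))"] conjI allI impI)
    show "0 < (fact (card (UNIV::'r set)) :: nat)" by simp
    fix x :: 'r assume "x dvd 1"
    then obtain k where k: "0 < k" "k \<le> card (UNIV::'r set)" "x ^ k = 1" using unit_pow_one by blast
    have "k dvd fact (card (UNIV::'r set))" using k by (intro dvd_fact) auto
    then obtain t where "fact (card (UNIV::'r set)) = k * t" by blast
    thus "x ^ fact (card (UNIV::'r set)) = 1" using k by (simp add: power_mult)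
  qed
  show "0 < units_exponent TYPE('r)"
    using LeastI_ex[OF ex] unfolding units_exponent_def by blast
  show "x ^ units_exponent TYPE('r) = 1" if "x dvd 1" for x :: 'r
    using LeastI_ex[OF ex] that unfolding units_exponent_def by blast
qed

lemma beta_facts:
  shows "0 < nilpotence_index TYPE('r::{comm_ring_1,finite})"
    and "\<And>x::'r. x ^ m = 0 \<Longrightarrow> x ^ nilpotence_index TYPE('r) = 0"
proof -
  have ex: "\<exists>n. 0 < n \<and> (\<forall>x::'r. (\<exists>m. x ^ m = 0) \<longrightarrow> x ^ n = 0)"
  proof (intro exI[of _ "card (UNIV::'r set)"] conjI allI impI)
    show "0 < card (UNIV::'r set)" by (simp add: finite_UNIV_card_ge_0)
    fix x :: 'r assume "\<exists>m. x ^ m = 0"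
    then obtain m where m: "x ^ m = 0" by blast
    obtain i j where ij: "i < j" "j \<le> card (UNIV::'r set)" "x ^ i = x ^ j" using pigeon_pow by blast
    have "x ^ (i + m * (j - i)) = x ^ i" using pow_period[OF ij(3)] ij by simp
    moreover have "m * 1 \<le> m * (j - i)" using ij by (intro mult_le_mono2) simp
    hence "m \<le> i + m * (j - i)" by linarith
    hence "x ^ (i + m * (j - i)) = 0" using m by (metis le_add_diff_inverse power_add mult_zero_left)
    ultimately have "x ^ i = 0" by simp
    moreover have "i \<le> card (UNIV::'r set)" using ij by simp
    ultimately show "x ^ card (UNIV::'r set) = 0" by (metis le_add_diff_inverse power_add mult_zero_left)
  qed
  show "0 < nilpotence_index TYPE('r)"
    using LeastI_ex[OF ex] unfolding nilpotence_index_def by blast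
  show "x ^ nilpotence_index TYPE('r) = 0" if "x ^ m = 0" for x :: 'r
    using LeastI_ex[OF ex] that unfolding nilpotence_index_def by blast
qed

lemma idem_pow: "(e::'r::comm_ring_1) * e = e \<Longrightarrow> 0 < n \<Longrightarrow> e ^ n = e"
proof (induction n)
  case (Suc n) thus ?case by (cases n) (simp_all add: mult.commute)
qed simp

lemma key_identity:
  fixes c :: "'r::{comm_ring_1,finite}"
  shows "(1 - c ^ units_exponent TYPE('r)) * c ^ nilpotence_index TYPE('r) = 0"
proof -
  let ?al = "units_exponent TYPE('r)" and ?be = "nilpotence_index TYPE('r)"
  obtain i j where ij: "i < j" "j \<le> card (UNIV::'r set)" "c ^ i = c ^ j" using pigeon_pow by blast
  define p where "p = j - i"
  have p0: "p > 0" using ij by (simp add: p_def)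
  have per: "c ^ (s + t * p) = c ^ s" if "i \<le> s" for s t
  proof -
    have "c ^ (i + t * p) = c ^ i" using pow_period[OF ij(3)] ij by (simp add: p_def)
    hence "c ^ (i + t * p) * c ^ (s - i) = c ^ i * c ^ (s - i)" by simp
    thus ?thesis using that by (simp add: power_add[symmetric] algebra_simps)
  qed
  define M where "M = (i + 1) * p"
  have "i * 1 \<le> i * p" using p0 by (intro mult_le_mono2) simp
  moreover have "M = i * p + p" by (simp add: M_def algebra_simps)
  ultimately have M: "i \<le> M" "0 < M" using p0 by linarith+
  define e where "e = c ^ M"
  have ee: "e * e = e" unfolding e_def using per[OF M(1), of "i + 1"] by (simp add: power_add[symmetric] M_def)
  have e1: "e * (1 - e) = 0" using ee by (simp add: algebra_simps)
  define w where "w = c * e + (1 - e)"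
  define w' where "w' = c ^ (M - 1) * e + (1 - e)"
  have cM: "c * c ^ (M - 1) = e" unfolding e_def using M(2) by (metis power_minus_mult mult.commute)
  have "w * w' = c * c ^ (M - 1) * (e * e) + (1 - e) * (1 - e) + (c * e * (1 - e) + c ^ (M - 1) * e * (1 - e))"
    unfolding w_def w'_def by (simp add: algebra_simps)
  also have "\<dots> = e + (1 - e) + (c * (e * (1 - e)) + c ^ (M - 1) * (e * (1 - e)))"
  proof -
    have "c * c ^ (M - 1) * (e * e) = e" using ee cM by simp
    moreover have "(1 - e) * (1 - e) = 1 - e" using ee by (simp add: algebra_simps)
    ultimately show ?thesis by (simp add: mult.assoc)
  qed
  also have "\<dots> = 1" using e1 by simp
  finally have "w dvd 1" by (metis dvdI)
  hence wa: "w ^ ?al = 1" by (rule alpha_facts(2))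
  have wpow: "w ^ n = c ^ n * e + (1 - e)" if "0 < n" for n
    using that
  proof (induction n)
    case (Suc n)
    show ?case
    proof (cases n)
      case 0 thus ?thesis by (simp add: w_def)
    next
      case (Suc n')
      hence "w ^ n = c ^ n * e + (1 - e)" using Suc.IH by simp
      hence "w ^ Suc n = (c ^ n * e + (1 - e)) * (c * e + (1 - e))" by (simp add: w_def mult.commute)
      also have "\<dots> = c ^ Suc n * (e * e) + (1 - e) * (1 - e) + (c ^ n * (e * (1 - e)) + c * (e * (1 - e)))"
        by (simp add: algebra_simps)
      also have "\<dots> = c ^ Suc n * e + (1 - e)" using ee e1 by (simp add: algebra_simps)
      finally show ?thesis .
    qed
  qed simp
  have "w ^ ?al = c ^ ?al * e + (1 - e)" by (rule wpow) (rule alpha_facts(1))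
  hence ceal: "c ^ ?al * e = e" using wa by (simp add: algebra_simps)
  have ome: "(1 - e) ^ n = 1 - e" if "0 < n" for n
    using idem_pow[of "1 - e" n] that ee by (simp add: algebra_simps)
  have "(c * (1 - e)) ^ M = c ^ M * (1 - e) ^ M" by (simp add: power_mult_distrib)
  also have "\<dots> = e * (1 - e)" using ome[OF M(2)] by (simp add: e_def)
  finally have "(c * (1 - e)) ^ M = e * (1 - e)" .
  hence "(c * (1 - e)) ^ M = 0" using e1 by simp
  hence "(c * (1 - e)) ^ ?be = 0" by (rule beta_facts(2))
  moreover have "(1 - e) ^ ?be = 1 - e" by (rule ome) (rule beta_facts(1))
  ultimately have nb: "c ^ ?be * (1 - e) = 0" by (simp add: power_mult_distrib)
  have "(1 - c ^ ?al) * c ^ ?be = (1 - c ^ ?al) * c ^ ?be * e + (1 - c ^ ?al) * (c ^ ?be * (1 - e))"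
    by (simp add: algebra_simps)
  also have "\<dots> = c ^ ?be * (e - c ^ ?al * e)" using nb by (simp add: algebra_simps)
  also have "\<dots> = 0" using ceal by simp
  finally show ?thesis .
qed

lemma bsupp_single: "bsupp (\<lambda>b. if b = p then r else 0) = (if r = 0 then {} else {p})"
  by (auto simp: bsupp_def)

lemma bmult_single_single:
  "bmult m (\<lambda>b. if b = p then r else 0) (\<lambda>b. if b = p' then s else 0) = (\<lambda>c. r * s * m p p' c)"
  unfolding bmult_def bsupp_single by auto

lemma bmult_bvec: "bmult m (bvec p) (bvec p') = (\<lambda>c. m p p' c)"
  unfolding bvec_def using bmult_single_single[of m p 1 p' 1] by simp

lemma bmult_nonzero:
  assumes "bmult m v w c \<noteq> 0"
  shows "\<exists>b1\<in>bsupp v. \<exists>b2\<in>bsupp w. m b1 b2 c \<noteq> 0"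
proof -
  from assms obtain b1 where b1: "b1 \<in> bsupp v"
    "(\<Sum>b2\<in>bsupp w. v b1 * w b2 * m b1 b2 c) \<noteq> 0"
    unfolding bmult_def by (meson sum.not_neutral_contains_not_neutral)
  then obtain b2 where b2: "b2 \<in> bsupp w" "v b1 * w b2 * m b1 b2 c \<noteq> 0"
    by (meson sum.not_neutral_contains_not_neutral)
  have "m b1 b2 c \<noteq> 0" using b2(2) by (metis mult_zero_right)
  thus ?thesis using b1 b2(1) by blast
qed

lemma bmult_point:
  assumes fv: "finite (bsupp v)" and fw: "finite (bsupp w)"
    and only: "\<And>b1 b2. b1 \<in> bsupp v \<Longrightarrow> b2 \<in> bsupp w \<Longrightarrow> m b1 b2 c \<noteq> 0 \<Longrightarrow> b1 = p1 \<and> b2 = p2"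
  shows "bmult m v w c = v p1 * w p2 * m p1 p2 c"
proof -
  let ?K = "v p1 * w p2 * m p1 p2 c"
  have "bmult m v w c = (\<Sum>b1\<in>bsupp v. \<Sum>b2\<in>bsupp w. if b1 = p1 then (if b2 = p2 then ?K else 0) else 0)"
    unfolding bmult_def
  proof (intro sum.cong refl)
    fix b1 b2 assume "b1 \<in> bsupp v" "b2 \<in> bsupp w"
    show "v b1 * w b2 * m b1 b2 c = (if b1 = p1 then (if b2 = p2 then ?K else 0) else 0)"
    proof (cases "m b1 b2 c = 0")
      case True thus ?thesis by (cases "b1 = p1"; cases "b2 = p2") simp_all
    next
      case False
      hence "b1 = p1 \<and> b2 = p2" using only[of b1 b2] \<open>b1 \<in> bsupp v\<close> \<open>b2 \<in> bsupp w\<close> by blast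
      thus ?thesis by simp
    qed
  qed
  also have "\<dots> = (\<Sum>b1\<in>bsupp v. if b1 = p1 then (if p2 \<in> bsupp w then ?K else 0) else 0)"
  proof (intro sum.cong refl)
    fix b1
    show "(\<Sum>b2\<in>bsupp w. if b1 = p1 then (if b2 = p2 then ?K else 0) else 0) =
          (if b1 = p1 then (if p2 \<in> bsupp w then ?K else 0) else 0)"
    proof (cases "b1 = p1")
      case True
      hence "(\<Sum>b2\<in>bsupp w. if b1 = p1 then (if b2 = p2 then ?K else 0) else 0) =
             (\<Sum>b2\<in>bsupp w. if b2 = p2 then ?K else 0)" by simp
      also have "\<dots> = (if p2 \<in> bsupp w then ?K else 0)" by (rule sum.delta[OF fw])
      finally show ?thesis using True by simp
    qed simp
  qed
  also have "\<dots> = (if p1 \<in> bsupp v then (if p2 \<in> bsupp w then ?K else 0) else 0)"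
    by (rule sum.delta[OF fv])
  also have "\<dots> = ?K"
  proof (cases "p1 \<in> bsupp v \<and> p2 \<in> bsupp w")
    case False
    hence "v p1 = 0 \<or> w p2 = 0" by (auto simp: bsupp_def)
    thus ?thesis by auto
  qed simp
  finally show ?thesis .
qed

lemma bcarrier_bvec: "w \<in> S \<Longrightarrow> bvec w \<in> bcarrier S"
  by (auto simp: bcarrier_def bsupp_def bvec_def)
lemma bcarrier_scale: "(t :: 'b \<Rightarrow> 'r::comm_ring_1) \<in> bcarrier S \<Longrightarrow> (\<lambda>w. r * t w) \<in> bcarrier S"
proof -
  assume a: "t \<in> bcarrier S"
  have "bsupp (\<lambda>w. r * t w) \<subseteq> bsupp t" by (auto simp: bsupp_def)
  thus ?thesis using a unfolding bcarrier_def by (auto elim: finite_subset[rotated])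
qed
lemma bcarrier_add: "(t :: 'b \<Rightarrow> 'r::comm_ring_1) \<in> bcarrier S \<Longrightarrow> t' \<in> bcarrier S \<Longrightarrow> (\<lambda>w. t w + t' w) \<in> bcarrier S"
proof -
  assume a: "t \<in> bcarrier S" "t' \<in> bcarrier S"
  have "bsupp (\<lambda>w. t w + t' w) \<subseteq> bsupp t \<union> bsupp t'" by (auto simp: bsupp_def)
  moreover have "finite (bsupp t \<union> bsupp t')" using a unfolding bcarrier_def by auto
  ultimately have "finite (bsupp (\<lambda>w. t w + t' w))" by (rule finite_subset)
  thus ?thesis using a \<open>bsupp (\<lambda>w. t w + t' w) \<subseteq> bsupp t \<union> bsupp t'\<close> unfolding bcarrier_def by auto
qed

section \<open>The comodule algebra computations\<close>

abbreviation mmB :: "nat \<Rightarrow> 'r::comm_ring_1 \<Rightarrow> 'r \<Rightarrow> 'r \<Rightarrow> _" where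
  "mmB N q u a \<equiv> tens (Bua_mult N q u a) (taft_mult N q)"

lemma vg_pow:
  fixes q u a :: "'r::comm_ring_1"
  assumes "i < N"
  shows "bpow (mmB N q u a) (bvec ((0,0),(0,0))) (bvec ((1,0),(1,0))) i = bvec ((i,0),(i,0))"
  using assms
proof (induction i)
  case 0 thus ?case by (simp add: bpow_def)
next
  case (Suc i)
  have "bpow (mmB N q u a) (bvec ((0,0),(0,0))) (bvec ((1,0),(1,0))) (Suc i)
     = bmult (mmB N q u a) (bvec ((1,0),(1,0))) (bpow (mmB N q u a) (bvec ((0,0),(0,0))) (bvec ((1,0),(1,0))) i)"
    by (simp add: bpow_def)
  also have "\<dots> = bmult (mmB N q u a) (bvec ((1,0),(1,0))) (bvec ((i,0),(i,0)))" using Suc by simp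
  also have "\<dots> = bvec ((Suc i,0),(Suc i,0))"
  proof (rule ext)
    fix c :: "(nat \<times> nat) \<times> (nat \<times> nat)"
    obtain c1 c2 c3 c4 where c: "c = ((c1,c2),(c3,c4))" by (metis prod.exhaust)
    have "bmult (mmB N q u a) (bvec ((1,0),(1,0))) (bvec ((i,0),(i,0))) c = mmB N q u a ((1,0),(1,0)) ((i,0),(i,0)) c"
      by (simp only: bmult_bvec)
    also have "\<dots> = bvec ((Suc i,0),(Suc i,0)) c"
      using Suc.prems by (simp add: c tens_def Bua_mult_def taft_mult_def bvec_def)
    finally show "bmult (mmB N q u a) (bvec ((1,0),(1,0))) (bvec ((i,0),(i,0))) c = bvec ((Suc i,0),(Suc i,0)) c" .
  qed
  finally show ?case .
qed

definition Sx :: "nat \<Rightarrow> ((nat \<times> nat) \<times> (nat \<times> nat)) set" where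
  "Sx j = {((0,b),(b,n)) | b n. b + n = j}"

lemma Sx_finite: "finite (Sx j)"
proof -
  have "Sx j \<subseteq> (\<lambda>b. ((0,b),(b,j-b))) ` {..j}" unfolding Sx_def by force
  thus ?thesis by (rule finite_subset) simp
qed

abbreviation vxe :: "(nat \<times> nat) \<times> (nat \<times> nat) \<Rightarrow> 'r::comm_ring_1" where
  "vxe \<equiv> (\<lambda>c. bvec ((0, 0), (0, 1)) c + bvec ((0, 1), (1, 0)) c)"

lemma vxe_supp: "bsupp vxe \<subseteq> {((0, 0), (0, 1)), ((0, 1), (1, 0))}"
  by (auto simp: bsupp_def bvec_def)

lemma vx_pow:
  fixes q u a :: "'r::comm_ring_1"
  assumes "j < N"
  shows "bsupp (bpow (mmB N q u a) (bvec ((0,0),(0,0))) vxe j) \<subseteq> Sx j \<and>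
         bpow (mmB N q u a) (bvec ((0,0),(0,0))) vxe j ((0,0),(0,j)) = 1"
  using assms
proof (induction j)
  case 0 thus ?case by (auto simp: bpow_def bsupp_def bvec_def Sx_def)
next
  case (Suc j)
  let ?X = "bpow (mmB N q u a) (bvec ((0,0),(0,0))) vxe j"
  have IH: "bsupp ?X \<subseteq> Sx j" "?X ((0,0),(0,j)) = 1" using Suc by auto
  have XS: "bpow (mmB N q u a) (bvec ((0,0),(0,0))) vxe (Suc j) = bmult (mmB N q u a) vxe ?X"
    by (simp add: bpow_def)
  have supp: "bsupp (bmult (mmB N q u a) vxe ?X) \<subseteq> Sx (Suc j)"
  proof
    fix c assume "c \<in> bsupp (bmult (mmB N q u a) vxe ?X)"
    hence "bmult (mmB N q u a) vxe ?X c \<noteq> 0" by (simp add: bsupp_def)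
    from bmult_nonzero[OF this] obtain b1 b2 where b1: "b1 \<in> bsupp (vxe :: _ \<Rightarrow> 'r)" and b2: "b2 \<in> bsupp ?X" and nz: "mmB N q u a b1 b2 c \<noteq> 0"
      by blast
    obtain b n where b2e: "b2 = ((0,b),(b,n))" "b + n = j" using b2 IH(1) unfolding Sx_def by blast
    obtain c1 c2 c3 c4 where c: "c = ((c1,c2),(c3,c4))" by (metis prod.exhaust)
    have bN: "b < N" "n < N" "Suc b < N" "Suc n < N" using b2e Suc.prems by auto
    from b1 vxe_supp have "b1 = ((0, 0), (0, 1)) \<or> b1 = ((0, 1), (1, 0))" by blast
    thus "c \<in> Sx (Suc j)"
    proof
      assume "b1 = ((0, 0), (0, 1))"
      hence "c = ((0,b),(b, Suc n))" using nz bN b2e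
        by (simp add: c tens_def Bua_mult_def taft_mult_def split: if_split_asm)
      thus ?thesis unfolding Sx_def using b2e by auto
    next
      assume "b1 = ((0, 1), (1, 0))"
      hence "c = ((0,Suc b),(Suc b, n))" using nz bN b2e
        by (simp add: c tens_def Bua_mult_def taft_mult_def split: if_split_asm)
      thus ?thesis unfolding Sx_def using b2e by auto
    qed
  qed
  have fX: "finite (bsupp ?X)" using IH(1) Sx_finite by (rule finite_subset)
  have fv: "finite (bsupp (vxe :: _ \<Rightarrow> 'r))" using vxe_supp by (rule finite_subset) simp
  have val: "bmult (mmB N q u a) vxe ?X ((0,0),(0,Suc j)) = (vxe :: _ \<Rightarrow> 'r) ((0, 0), (0, 1)) * ?X ((0,0),(0,j)) *
      mmB N q u a ((0, 0), (0, 1)) ((0,0),(0,j)) ((0,0),(0,Suc j))"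
  proof (rule bmult_point[OF fv fX])
    fix b1 b2 assume b1: "b1 \<in> bsupp (vxe :: _ \<Rightarrow> 'r)" and b2: "b2 \<in> bsupp ?X"
      and nz: "mmB N q u a b1 b2 ((0,0),(0,Suc j)) \<noteq> 0"
    obtain b n where b2e: "b2 = ((0,b),(b,n))" "b + n = j" using b2 IH(1) unfolding Sx_def by blast
    have bN: "b < N" "n < N" "Suc b < N" "Suc n < N" using b2e Suc.prems by auto
    from b1 vxe_supp have "b1 = ((0, 0), (0, 1)) \<or> b1 = ((0, 1), (1, 0))" by blast
    thus "b1 = ((0, 0), (0, 1)) \<and> b2 = ((0,0),(0,j))"
    proof
      assume "b1 = ((0, 0), (0, 1))"
      thus ?thesis using nz bN b2e
        by (simp add: tens_def Bua_mult_def taft_mult_def split: if_split_asm)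
    next
      assume "b1 = ((0, 1), (1, 0))"
      thus ?thesis using nz bN b2e
        by (simp add: tens_def Bua_mult_def taft_mult_def split: if_split_asm)
    qed
  qed
  also have "\<dots> = 1" using IH(2) Suc.prems by (simp add: bvec_def tens_def Bua_mult_def taft_mult_def)
  finally show ?case using XS supp by simp
qed

lemma rho_basis_val:
  fixes q u a :: "'r::comm_ring_1"
  assumes "i < N" "j < N" "i' < N" "j' < N"
  shows "Bua_rho_basis N q u a (i, j) ((i',0),(i',j')) = (if (i, j) = (i', j') then 1 else 0)"
proof -
  let ?X = "bpow (mmB N q u a) (bvec ((0,0),(0,0))) vxe j"
  have IH: "bsupp ?X \<subseteq> Sx j" "?X ((0,0),(0,j)) = 1" using vx_pow[OF assms(2)] by auto
  have fX: "finite (bsupp ?X)" using IH(1) Sx_finite by (rule finite_subset)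
  have fv: "finite (bsupp (bvec ((i,0),(i,0)) :: (nat \<times> nat) \<times> (nat \<times> nat) \<Rightarrow> 'r))" by (simp add: bsupp_def bvec_def)
  have "Bua_rho_basis N q u a (i, j) ((i',0),(i',j')) = bmult (mmB N q u a) (bvec ((i,0),(i,0))) ?X ((i',0),(i',j'))"
    unfolding Bua_rho_basis_def Let_def prod.case vg_pow[OF assms(1)] ..
  also have "\<dots> = (bvec ((i,0),(i,0)) :: (nat \<times> nat) \<times> (nat \<times> nat) \<Rightarrow> 'r) ((i,0),(i,0)) * ?X ((0,0),(0,j)) * mmB N q u a ((i,0),(i,0)) ((0,0),(0,j)) ((i',0),(i',j'))"
  proof (rule bmult_point[OF fv fX])
    fix b1 b2 assume b1: "b1 \<in> bsupp (bvec ((i,0),(i,0)) :: (nat \<times> nat) \<times> (nat \<times> nat) \<Rightarrow> 'r)" and b2: "b2 \<in> bsupp ?X"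
      and nz: "mmB N q u a b1 b2 ((i',0),(i',j')) \<noteq> 0"
    have b1e: "b1 = ((i,0),(i,0))" using b1 by (simp add: bsupp_def bvec_def split: if_splits)
    obtain b n where b2e: "b2 = ((0,b),(b,n))" "b + n = j" using b2 IH(1) unfolding Sx_def by blast
    have bN: "b < N" "n < N" using b2e assms by auto
    show "b1 = ((i,0),(i,0)) \<and> b2 = ((0,0),(0,j))"
      using nz bN b2e b1e assms by (simp add: tens_def Bua_mult_def taft_mult_def split: if_split_asm)
  qed
  also have "\<dots> = (if (i, j) = (i', j') then 1 else 0)"
    using IH(2) assms by (auto simp: bvec_def tens_def Bua_mult_def taft_mult_def)
  finally show ?thesis .
qed

lemma rho_val:
  assumes c: "c \<in> bcarrier (taft_basis N)" and ij: "i' < N" "j' < N"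
  shows "Bua_rho N q u a c ((i',0),(i',j')) = c (i', j')"
proof -
  have fc: "finite (bsupp c)" and sc: "bsupp c \<subseteq> taft_basis N" using c by (auto simp: bcarrier_def)
  have "Bua_rho N q u a c ((i',0),(i',j')) = (\<Sum>\<beta>\<in>bsupp c. if \<beta> = (i', j') then c \<beta> else 0)"
    unfolding Bua_rho_def
  proof (intro sum.cong refl)
    fix \<beta> assume "\<beta> \<in> bsupp c"
    then obtain i j where "\<beta> = (i, j)" "i < N" "j < N" using sc by (auto simp: taft_basis_def)
    thus "c \<beta> * Bua_rho_basis N q u a \<beta> ((i',0),(i',j')) = (if \<beta> = (i', j') then c \<beta> else 0)"
      using rho_basis_val[of i N j i' j' q u a] ij by auto
  qed
  also have "\<dots> = c (i', j')" using fc by (auto simp: bsupp_def)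
  finally show ?thesis .
qed

lemma taft_Delta_g:
  assumes "2 \<le> N"
  shows "taft_Delta N q (1,0) = (bvec ((1,0),(1,0)) :: _ \<Rightarrow> 'r::comm_ring_1)"
proof -
  let ?mm = "tens (taft_mult N q) (taft_mult N q) :: _ \<Rightarrow> _ \<Rightarrow> _ \<Rightarrow> 'r"
  have st: "bmult ?mm (bvec ((1,0),(1,0))) (bvec ((0,0),(0,0))) = bvec ((1,0),(1,0))"
  proof (rule ext)
    fix c :: "(nat \<times> nat) \<times> (nat \<times> nat)"
    obtain c1 c2 c3 c4 where c: "c = ((c1,c2),(c3,c4))" by (metis prod.exhaust)
    have "bmult ?mm (bvec ((1,0),(1,0))) (bvec ((0,0),(0,0))) c = ?mm ((1,0),(1,0)) ((0,0),(0,0)) c"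
      by (simp only: bmult_bvec)
    also have "\<dots> = bvec ((1,0),(1,0)) c"
      using assms by (simp add: c tens_def taft_mult_def bvec_def)
    finally show "bmult ?mm (bvec ((1,0),(1,0))) (bvec ((0,0),(0,0))) c = bvec ((1,0),(1,0)) c" .
  qed
  have "taft_Delta N q (1,0) = bmult ?mm (bmult ?mm (bvec ((1,0),(1,0))) (bvec ((0,0),(0,0)))) (bvec ((0,0),(0,0)))"
    by (simp add: taft_Delta_def Let_def bpow_def)
  also have "\<dots> = bvec ((1,0),(1,0))" by (simp only: st)
  finally show ?thesis .
qed

lemma T_delta_letter_nz:
  assumes "2 \<le> N" "T_delta_letter N q (1,(1,0)) (w1,h1) \<noteq> (0::'r::comm_ring_1)"
  shows "h1 = (1,0)"
proof (cases w1)
  case Nil thus ?thesis using assms(2) by (simp add: T_delta_letter_def)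
next
  case (Cons x xs)
  obtain i' h1' where x: "x = (i', h1')" by (metis prod.exhaust)
  show ?thesis
  proof (cases xs)
    case Nil
    hence "taft_Delta N q (1,0) (h1', h1) \<noteq> (0::'r)"
      using assms(2) Cons x by (simp add: T_delta_letter_def split: if_split_asm)
    hence "(bvec ((1,0),(1,0)) :: _ \<Rightarrow> 'r) (h1', h1) \<noteq> 0"
      unfolding taft_Delta_g[OF assms(1)] .
    thus ?thesis by (simp add: bvec_def split: if_split_asm)
  next
    case (Cons y ys)
    thus ?thesis using assms(2) \<open>w1 = x # xs\<close> x by (simp add: T_delta_letter_def)
  qed
qed

lemma T_delta_G_zero:
  assumes N: "2 \<le> N" and h: "h \<noteq> (1,0)"
  shows "T_delta N q (T_G :: _ \<Rightarrow> 'r::comm_ring_1) (w,h) = 0"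
proof -
  let ?l = "(1::nat,(1::nat,0::nat))"
  have bs: "bsupp (T_G :: _ \<Rightarrow> 'r) = {[?l]}" by (auto simp: T_G_def bsupp_def bvec_def)
  have "T_delta N q (T_G :: _ \<Rightarrow> 'r) (w,h) = (\<Sum>w'\<in>{[?l]}. (T_G :: _ \<Rightarrow> 'r) w' * T_delta_word N q w' (w,h))"
    unfolding T_delta_def bs ..
  also have "\<dots> = T_delta_word N q [?l] (w,h)" by (simp add: T_G_def bvec_def)
  also have "\<dots> = bmult (tens T_mult (taft_mult N q)) (T_delta_letter N q ?l) (bvec ([],(0,0))) (w,h)"
    by (simp add: T_delta_word_def)
  also have "\<dots> = 0"
  proof (rule ccontr)
    assume "bmult (tens T_mult (taft_mult N q)) (T_delta_letter N q ?l) (bvec ([],(0,0))) (w,h) \<noteq> (0::'r)"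
    from bmult_nonzero[OF this] obtain b1 b2 where
      b1: "b1 \<in> bsupp (T_delta_letter N q ?l :: _ \<Rightarrow> 'r)" and
      b2: "b2 \<in> bsupp (bvec ([],(0::nat,0::nat)) :: _ \<Rightarrow> 'r)" and
      nz: "tens T_mult (taft_mult N q) b1 b2 (w,h) \<noteq> (0::'r)" by blast
    obtain w1 h1 where b1e: "b1 = (w1, h1)" by (metis prod.exhaust)
    have "h1 = (1,0)" using T_delta_letter_nz[OF N, of q w1 h1] b1 b1e by (simp add: bsupp_def)
    moreover have "b2 = ([],(0,0))" using b2 by (simp add: bsupp_def bvec_def split: if_split_asm)
    ultimately have "(T_mult w1 [] w :: 'r) * taft_mult N q (1,0) (0,0) h \<noteq> 0"
      using nz b1e by (simp add: tens_def)
    hence "taft_mult N q (1,0) (0,0) h \<noteq> (0::'r)" by (metis mult_zero_right)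
    thus False using h N by (simp add: taft_mult_def split: if_split_asm)
  qed
  finally show ?thesis .
qed

lemma T_step:
  "bmult T_mult (bvec [l]) (bvec (replicate n l)) = (bvec (replicate (Suc n) l) :: _ \<Rightarrow> 'r::comm_ring_1)"
  unfolding bmult_bvec by (rule ext) (simp add: T_mult_def bvec_def)

lemma bpow_G:
  "bpow T_mult (bvec []) (bvec [l]) n = (bvec (replicate n l) :: _ \<Rightarrow> 'r::comm_ring_1)"
proof (induction n)
  case 0 thus ?case by (simp add: bpow_def)
next
  case (Suc n)
  have "bpow T_mult (bvec []) (bvec [l]) (Suc n) = bmult T_mult (bvec [l]) (bpow T_mult (bvec []) (bvec [l]) n)"
    by (simp add: bpow_def)
  thus ?case using Suc T_step by (metis (no_types))
qed

theorem proposition3p5: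
  fixes N :: nat and q u a :: "'r::{comm_ring_1, finite}"
  assumes "2 \<le> N"
    and "(of_nat N :: 'r) dvd 1"
    and "poly (map_poly of_int (cyclotomic_poly N)) q = 0"
    and "u dvd 1"
  shows "poly_H_identity N q u a
           (Q_poly u (units_exponent TYPE('r) div N) (units_exponent TYPE('r))
                     (nilpotence_index TYPE('r)))"
proof -
  note N2 = assms(1)
  have N0: "N > 0" using N2 by simp
  define al where "al = units_exponent TYPE('r)"
  define be where "be = nilpotence_index TYPE('r)"
  define k where "k = al div N"
  have qN: "q ^ N = 1" by (rule q_facts(1)[OF assms(1,2,3)])
  have "q * q ^ (N - 1) = 1" using qN N0 by (metis power_minus_mult mult.commute)
  hence "q dvd 1" by (metis dvdI)
  hence "q ^ al = 1" unfolding al_def by (rule alpha_facts(2))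
  hence "N dvd al" by (rule q_facts(2)[OF assms(1,2,3)])
  hence al_mod: "al mod N = 0" and al_div: "al div N = k" by (simp_all add: k_def)
  let ?l = "(1::nat,(1::nat,0::nat))"
  have lS: "?l \<in> {i. 1 \<le> i} \<times> taft_basis N" using N2 by (simp add: taft_basis_def)
  have repC: "(bvec (replicate n ?l) :: _ \<Rightarrow> 'r) \<in> bcarrier (T_basis N)" for n
    by (rule bcarrier_bvec) (use lS in \<open>auto simp: T_basis_def\<close>)
  have TG: "(T_G :: _ \<Rightarrow> 'r) = bvec (replicate 1 ?l)" by (simp add: T_G_def)
  show ?thesis unfolding poly_H_identity_def
  proof (intro allI impI)
    fix f assume hom: "comod_alg_hom N q u a f"
    have h1: "\<forall>t\<in>bcarrier (T_basis N). f t \<in> bcarrier (taft_basis N)"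
      using hom unfolding comod_alg_hom_def by blast
    have h2: "\<forall>t\<in>bcarrier (T_basis N). \<forall>t'\<in>bcarrier (T_basis N).
         f (\<lambda>w. t w + t' w) = (\<lambda>b. f t b + f t' b)"
      using hom unfolding comod_alg_hom_def by blast
    have h3: "\<forall>r. \<forall>t\<in>bcarrier (T_basis N). f (\<lambda>w. r * t w) = (\<lambda>b. r * f t b)"
      using hom unfolding comod_alg_hom_def by blast
    have h4: "\<forall>t\<in>bcarrier (T_basis N). \<forall>t'\<in>bcarrier (T_basis N).
         f (bmult T_mult t t') = bmult (Bua_mult N q u a) (f t) (f t')"
      using hom unfolding comod_alg_hom_def by blast
    have h5: "f (bvec []) = bvec (0, 0)"
      using hom unfolding comod_alg_hom_def by blast
    have h6: "\<forall>t\<in>bcarrier (T_basis N). Bua_rho N q u a (f t) = tens_id f (T_delta N q t)"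
      using hom unfolding comod_alg_hom_def by blast
    have zC: "(\<lambda>w. 0 :: 'r) \<in> bcarrier (T_basis N)" by (simp add: bcarrier_def bsupp_def)
    have f0: "f (\<lambda>w. 0) = (\<lambda>b. 0)"
      using h3[rule_format, OF zC, of 0] by simp
    define c where "c = f T_G"
    have GC: "(T_G :: _ \<Rightarrow> 'r) \<in> bcarrier (T_basis N)" using repC[of 1] TG by simp
    have cc: "c \<in> bcarrier (taft_basis N)" unfolding c_def using h1 GC by blast
    have rho: "Bua_rho N q u a c = tens_id f (T_delta N q T_G)" unfolding c_def using h6 GC by blast
    have van: "c (i', j') = 0" if "i' < N" "j' < N" "(i', j') \<noteq> (1, 0)" for i' j'
    proof -
      have "c (i', j') = Bua_rho N q u a c ((i',0),(i',j'))" using rho_val[OF cc that(1,2)] by simp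
      also have "\<dots> = f (\<lambda>w. T_delta N q T_G (w, (i',j'))) (i',0)" by (simp add: rho tens_id_def)
      also have "(\<lambda>w. T_delta N q (T_G :: _ \<Rightarrow> 'r) (w, (i',j'))) = (\<lambda>w. 0)"
        using T_delta_G_zero[OF N2 that(3)] by auto
      finally show ?thesis using f0 by simp
    qed
    define c0 where "c0 = c (1,0)"
    have cform: "c = (\<lambda>b. if b = (1,0) then c0 else 0)"
    proof (rule ext)
      fix b :: "nat \<times> nat"
      obtain i' j' where b: "b = (i', j')" by (metis prod.exhaust)
      show "c b = (if b = (1,0) then c0 else 0)"
      proof (cases "b = (1,0)")
        case True thus ?thesis by (simp add: c0_def)
      next
        case False
        show ?thesis
        proof (cases "i' < N \<and> j' < N")
          case True
          have ne: "(i', j') \<noteq> (1,0)" using False b by simp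
          have "c b = 0" using van[OF _ _ ne] True b by simp
          thus ?thesis using False by simp
        next
          case nb: False
          have "b \<notin> bsupp c" using cc nb b by (auto simp: bcarrier_def taft_basis_def)
          thus ?thesis using False by (simp add: bsupp_def)
        qed
      qed
    qed
    have pw: "f (bvec (replicate n ?l)) = (\<lambda>b. if b = (n mod N, 0) then c0 ^ n * u ^ (n div N) else 0)" for n
    proof (induction n)
      case 0
      have "f (bvec (replicate 0 ?l)) = bvec (0,0)" using h5 by simp
      also have "\<dots> = (\<lambda>b. if b = (0 mod N, 0) then c0 ^ 0 * u ^ (0 div N) else 0)"
        by (rule ext) (simp add: bvec_def)
      finally show ?case .
    next
      case (Suc n)
      have "f (bvec (replicate (Suc n) ?l)) = f (bmult T_mult (bvec [?l]) (bvec (replicate n ?l)))"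
        by (simp only: T_step)
      also have "\<dots> = bmult (Bua_mult N q u a) c (f (bvec (replicate n ?l)))"
        using h4 repC[of 1] repC[of n] unfolding c_def T_G_def by simp
      also have "\<dots> = (\<lambda>b. c0 * (c0 ^ n * u ^ (n div N)) * Bua_mult N q u a (1,0) (n mod N, 0) b)"
        unfolding Suc cform by (rule bmult_single_single)
      also have "\<dots> = (\<lambda>b. if b = (Suc n mod N, 0) then c0 ^ Suc n * u ^ (Suc n div N) else 0)"
      proof (rule ext)
        fix b :: "nat \<times> nat"
        have lt: "n mod N < N" using N0 by simp
        show "c0 * (c0 ^ n * u ^ (n div N)) * Bua_mult N q u a (1,0) (n mod N, 0) b =
              (if b = (Suc n mod N, 0) then c0 ^ Suc n * u ^ (Suc n div N) else 0)"
        proof (cases "Suc (n mod N) = N")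
          case True
          hence "Suc n mod N = 0" "Suc n div N = Suc (n div N)" by (simp_all add: mod_Suc div_Suc)
          thus ?thesis using True by (simp add: Bua_mult_def mod_Suc_eq algebra_simps)
        next
          case False
          hence "Suc n mod N = Suc (n mod N)" "Suc n div N = n div N" "\<not> N \<le> Suc (n mod N)"
            using lt by (simp_all add: mod_Suc div_Suc)
          thus ?thesis using False by (simp add: Bua_mult_def mod_Suc_eq algebra_simps)
        qed
      qed
      finally show ?case .
    qed
    let ?A = "\<lambda>w. u ^ k * bvec [] w - bpow T_mult (bvec []) T_G al w"
    have Aeq: "?A = (\<lambda>w. (\<lambda>w. u ^ k * bvec (replicate 0 ?l) w) w + (\<lambda>w. (-1) * bvec (replicate al ?l) w) w)"
      by (simp add: T_G_def bpow_G)
    have AC: "?A \<in> bcarrier (T_basis N)"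
      unfolding Aeq by (intro bcarrier_add bcarrier_scale repC)
    have fA: "f ?A = (\<lambda>b. if b = (0,0) then u ^ k - c0 ^ al * u ^ k else 0)"
    proof -
      have "f ?A = (\<lambda>b. f (\<lambda>w. u ^ k * bvec (replicate 0 ?l) w) b + f (\<lambda>w. (-1) * bvec (replicate al ?l) w) b)"
        unfolding Aeq
        using h2[rule_format, OF bcarrier_scale[OF repC[of 0], where r="u ^ k"] bcarrier_scale[OF repC[of al], where r="-1"]]
        by simp
      also have "\<dots> = (\<lambda>b. u ^ k * f (bvec (replicate 0 ?l)) b + (-1) * f (bvec (replicate al ?l)) b)"
        using h3[rule_format, OF repC[of 0], where r="u ^ k"] h3[rule_format, OF repC[of al], where r="-1"]
        by simp
      also have "\<dots> = (\<lambda>b. if b = (0,0) then u ^ k - c0 ^ al * u ^ k else 0)"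
        by (rule ext) (simp only: pw, simp add: al_mod al_div)
      finally show ?thesis .
    qed
    have QP: "Q_poly u k al be = bmult T_mult ?A (bvec (replicate be ?l))"
      by (simp add: Q_poly_def T_G_def bpow_G)
    have "f (Q_poly u k al be) = bmult (Bua_mult N q u a) (f ?A) (f (bvec (replicate be ?l)))"
      unfolding QP using h4 AC repC by blast
    also have "\<dots> = (\<lambda>b. (u ^ k - c0 ^ al * u ^ k) * (c0 ^ be * u ^ (be div N)) * Bua_mult N q u a (0,0) (be mod N, 0) b)"
      unfolding fA pw by (rule bmult_single_single)
    also have "\<dots> = (\<lambda>b. 0)"
    proof (rule ext)
      fix b
      have "(1 - c0 ^ al) * c0 ^ be = 0" unfolding al_def be_def by (rule key_identity)
      hence "(u ^ k - c0 ^ al * u ^ k) * (c0 ^ be * u ^ (be div N)) = 0"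
        by (metis (no_types, lifting) mult.assoc mult.commute mult_zero_left right_diff_distrib mult_1_right)
      thus "(u ^ k - c0 ^ al * u ^ k) * (c0 ^ be * u ^ (be div N)) * Bua_mult N q u a (0,0) (be mod N, 0) b = 0"
        by simp
    qed
    finally show "f (Q_poly u (units_exponent TYPE('r) div N) (units_exponent TYPE('r)) (nilpotence_index TYPE('r))) = (\<lambda>_. 0)"
      by (simp add: k_def al_def be_def)
  qed
qed

end
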